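(* Let $Z$ be a del Pezzo surface. The orthogonal group $O(Z)$ is generated by the finite Weyl group $W(Z)$ and the subgroup $\mathrm{Pic}^0(Z)$ (acting on $K(Z)$ by tensor product); moreover $W(Z)\cap\mathrm{Pic}^0(Z)$ is trivial and $\mathrm{Pic}^0(Z)$ is normal in $O(Z)$, so that $O(Z)=W(Z)\ltimes\mathrm{Pic}^0(Z)$.
   Context: $Z$ is a smooth projective connected surface over $\mathbb{C}$ with ample $\omega_Z^{-1}$; $K_Z=c_1(\omega_Z)\in NS(Z)$. $K(Z)$ is the Grothendieck group of the bounded derived category of coherent sheaves; $r$ rank, $d(E)=c_1(E)\cdot(-K_Z)$, $\chi(E)$ Euler characteristic, $\chi(E,F)=\sum_i(-1)^i\dim\mathrm{Hom}^i(E,F)$ the Euler form. There is an isomorphism $K(Z)\cong\mathbb{Z}[\mathcal{O}_Z]\oplus NS(Z)\oplus\mathbb{Z}\delta$, $[E]\mapsto(r(E),c_1(E),\chi(E)-r(E))$, where $\delta$ is the class of a skyscraper sheaf of a point; through it $K_Z^\perp=\{\alpha\in NS(Z):\alpha\cdot K_Z=0\}$ is viewed inside $K(Z)$. $O(Z)$ is the group of automorphisms of $K(Z)$ preserving $\chi(-,-)$, $r$ and $d$. A finite root is $\alpha\in K_Z^\perp$ with $\chi(\alpha,\alpha)=2$; $W(Z)$ is the group generated by the reflections $\beta\mapsto\beta-\chi(\beta,\alpha)\alpha$ for finite roots $\alpha$. $\mathrm{Pic}^0(Z)=\{L\in\mathrm{Pic}(Z):c_1(L)\cdot K_Z=0\}$,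 acting on $K(Z)$ by $[E]\mapsto[E\otimes L]$, which lies in $O(Z)$. *)

theory Defs
  imports Main "HOL-Library.Product_Plus" "HOL-Library.Function_Algebras"
begin

text \<open>NS(Z) = Pic(Z) is modelled as
  'n \<Rightarrow> int for a finite index type 'n, with intersection form Q and canonical class K.
  The classification of del Pezzo surfaces says (NS(Z), intersection form, K_Z) is
  isometric to that of P^2 blown up in n \<le> 8 points (basis h, e_1..e_n, K = -3h + sum e_i)
  or of P^1 x P^1 (hyperbolic plane, K = (-2,-2)).\<close>

definition dP_NS :: "(('n::finite \<Rightarrow> int) \<Rightarrow> ('n \<Rightarrow> int) \<Rightarrow> int) \<Rightarrow> ('n \<Rightarrow> int) \<Rightarrow> bool" where
  "dP_NS Q K \<longleftrightarrow> (\<exists>e :: nat \<Rightarrow> 'n. bij_betw e {..<card (UNIV :: 'n set)} UNIV \<and>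
     ((card (UNIV :: 'n set) \<le> 9 \<and>
       (\<forall>x y. Q x y = x (e 0) * y (e 0) - (\<Sum>i\<in>{1..<card (UNIV :: 'n set)}. x (e i) * y (e i))) \<and>
       K (e 0) = -3 \<and> (\<forall>i\<in>{1..<card (UNIV :: 'n set)}. K (e i) = 1))
    \<or> (card (UNIV :: 'n set) = 2 \<and>
       (\<forall>x y. Q x y = x (e 0) * y (e 1) + x (e 1) * y (e 0)) \<and>
       K (e 0) = -2 \<and> K (e 1) = -2)))"

text \<open>K(Z) = Z[O_Z] + NS(Z) + Z delta, a class being (r, c_1, chi - r).\<close>
type_synonym 'n Kcls = "int \<times> ('n \<Rightarrow> int) \<times> int"

definition rk :: "'n Kcls \<Rightarrow> int" where "rk x = fst x"

definition degK :: "(('n \<Rightarrow> int) \<Rightarrow> ('n \<Rightarrow> int) \<Rightarrow> int) \<Rightarrow> ('n \<Rightarrow> int) \<Rightarrow> 'n Kcls \<Rightarrow> int" where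
  "degK Q K x = - Q (fst (snd x)) K"

text \<open>Euler form (Riemann-Roch): for E=(r1,c1,s1), F=(r2,c2,s2),
  chi(E,F) = r1 r2 + r1 s2 + r2 s1 - c1.c2 + r2 (c1.K).\<close>
definition euler :: "(('n \<Rightarrow> int) \<Rightarrow> ('n \<Rightarrow> int) \<Rightarrow> int) \<Rightarrow> ('n \<Rightarrow> int) \<Rightarrow> 'n Kcls \<Rightarrow> 'n Kcls \<Rightarrow> int" where
  "euler Q K x y = (case x of (r1, c1, s1) \<Rightarrow> case y of (r2, c2, s2) \<Rightarrow>
      r1 * r2 + r1 * s2 + r2 * s1 - Q c1 c2 + r2 * Q c1 K)"

definition additive_map :: "('a::plus \<Rightarrow> 'a) \<Rightarrow> bool" where
  "additive_map f \<longleftrightarrow> (\<forall>x y. f (x + y) = f x + f y)"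

definition Ogroup :: "(('n \<Rightarrow> int) \<Rightarrow> ('n \<Rightarrow> int) \<Rightarrow> int) \<Rightarrow> ('n \<Rightarrow> int) \<Rightarrow> ('n Kcls \<Rightarrow> 'n Kcls) set" where
  "Ogroup Q K = {f. bij f \<and> additive_map f \<and> (\<forall>x y. euler Q K (f x) (f y) = euler Q K x y)
      \<and> (\<forall>x. rk (f x) = rk x) \<and> (\<forall>x. degK Q K (f x) = degK Q K x)}"

definition ns_cls :: "('n \<Rightarrow> int) \<Rightarrow> 'n Kcls" where "ns_cls a = (0, a, 0)"

definition finite_roots :: "(('n \<Rightarrow> int) \<Rightarrow> ('n \<Rightarrow> int) \<Rightarrow> int) \<Rightarrow> ('n \<Rightarrow> int) \<Rightarrow> 'n Kcls set" where
  "finite_roots Q K = {ns_cls a | a. Q a K = 0 \<and> euler Q K (ns_cls a) (ns_cls a) = 2}"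

definition refl :: "(('n \<Rightarrow> int) \<Rightarrow> ('n \<Rightarrow> int) \<Rightarrow> int) \<Rightarrow> ('n \<Rightarrow> int) \<Rightarrow> 'n Kcls \<Rightarrow> 'n Kcls \<Rightarrow> 'n Kcls" where
  "refl Q K \<alpha> \<beta> = \<beta> - (let k = euler Q K \<beta> \<alpha> in (k * fst \<alpha>, (\<lambda>i. k * fst (snd \<alpha>) i), k * snd (snd \<alpha>)))"

inductive_set gen_group :: "('a \<Rightarrow> 'a) set \<Rightarrow> ('a \<Rightarrow> 'a) set" for S where
  gen_id: "id \<in> gen_group S"
| gen_mult: "f \<in> S \<Longrightarrow> g \<in> gen_group S \<Longrightarrow> f \<circ> g \<in> gen_group S"
| gen_inv: "f \<in> S \<Longrightarrow> g \<in> gen_group S \<Longrightarrow> inv f \<circ> g \<in> gen_group S"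

definition Weyl :: "(('n \<Rightarrow> int) \<Rightarrow> ('n \<Rightarrow> int) \<Rightarrow> int) \<Rightarrow> ('n \<Rightarrow> int) \<Rightarrow> ('n Kcls \<Rightarrow> 'n Kcls) set" where
  "Weyl Q K = gen_group {refl Q K \<alpha> | \<alpha>. \<alpha> \<in> finite_roots Q K}"

text \<open>Tensoring by a line bundle L with c_1(L) = l:
  [E (x) L] = (r, c + r l, s + c.l + r (l.l - l.K)/2)  (Riemann-Roch).\<close>
definition twist :: "(('n \<Rightarrow> int) \<Rightarrow> ('n \<Rightarrow> int) \<Rightarrow> int) \<Rightarrow> ('n \<Rightarrow> int) \<Rightarrow> ('n \<Rightarrow> int) \<Rightarrow> 'n Kcls \<Rightarrow> 'n Kcls" where
  "twist Q K l x = (case x of (r, c, s) \<Rightarrow>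
     (r, (\<lambda>i. c i + r * l i), s + Q c l + r * ((Q l l - Q l K) div 2)))"

definition Pic0 :: "(('n \<Rightarrow> int) \<Rightarrow> ('n \<Rightarrow> int) \<Rightarrow> int) \<Rightarrow> ('n \<Rightarrow> int) \<Rightarrow> ('n Kcls \<Rightarrow> 'n Kcls) set" where
  "Pic0 Q K = {twist Q K l | l. Q l K = 0}"

end

theory Submission
  imports Defs
begin


lemma cs_int:
  fixes b :: "'a \<Rightarrow> int"
  assumes "finite I"
  shows "(\<Sum>i\<in>I. b i)^2 \<le> int (card I) * (\<Sum>i\<in>I. (b i)^2)"
proof -
  have "0 \<le> (\<Sum>i\<in>I. \<Sum>j\<in>I. (b i - b j)^2)"
    by (intro sum_nonneg) auto
  also have "\<dots> = (\<Sum>i\<in>I. \<Sum>j\<in>I. (b i)^2 + (b j)^2 - 2 * (b i * b j))"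
    by (simp add: power2_eq_square algebra_simps)
  also have "\<dots> = 2 * (int (card I) * (\<Sum>i\<in>I. (b i)^2)) - 2 * (\<Sum>i\<in>I. b i)^2"
    by (simp add: sum.distrib sum_subtractf sum_distrib_left sum_product power2_eq_square
         sum.swap[of "\<lambda>i j. b j * b j"] mult.commute)
  finally show ?thesis by simp
qed

lemma exc_nonneg:
  fixes y :: "'a \<Rightarrow> int"
  assumes "finite I" "card I \<le> 8"
    and "y0^2 - (\<Sum>i\<in>I. (y i)^2) = -1" and "-3*y0 - (\<Sum>i\<in>I. y i) = -1"
  shows "y0 \<ge> 0"
proof (rule ccontr)
  assume neg: "\<not> y0 \<ge> 0"
  have cs: "(\<Sum>i\<in>I. y i)^2 \<le> int (card I) * (\<Sum>i\<in>I. (y i)^2)" using cs_int assms(1) .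
  have s2: "(\<Sum>i\<in>I. (y i)^2) = y0^2 + 1" using assms(3) by simp
  have s1: "(\<Sum>i\<in>I. y i) = 1 - 3*y0" using assms(4) by simp
  have "int (card I) * (\<Sum>i\<in>I. (y i)^2) \<le> 8 * (\<Sum>i\<in>I. (y i)^2)"
    using assms(2) by (intro mult_right_mono) (auto intro: sum_nonneg)
  with cs s1 s2 have "(1 - 3*y0)^2 \<le> 8 * (y0^2 + 1)" by simp
  hence "y0^2 - 6*y0 - 7 \<le> 0" by (simp add: power2_eq_square algebra_simps)
  hence "(y0 + 1) * (y0 - 7) \<le> 0" by (simp add: power2_eq_square algebra_simps)
  hence "y0 \<ge> -1" using neg by (smt (verit) mult_neg_neg)
  hence y0: "y0 = -1" using neg by simp
  have "(\<Sum>i\<in>I. y i) \<le> (\<Sum>i\<in>I. (y i)^2)"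
    by (intro sum_mono) (simp add: power2_eq_square, smt (verit) mult_le_cancel_right1 mult_nonneg_nonneg mult_neg_neg)
  with s1 s2 y0 show False by simp
qed




lemma obtain_max:
  fixes b :: "'a \<Rightarrow> int"
  assumes "finite I" "I \<noteq> {}"
  obtains i where "i \<in> I" "\<forall>j\<in>I. b j \<le> b i"
proof -
  have "Max (b ` I) \<in> b ` I" using assms by simp
  then obtain i where "i \<in> I" "b i = Max (b ` I)" by auto
  moreover have "\<forall>j\<in>I. b j \<le> Max (b ` I)" using assms by simp
  ultimately show ?thesis using that by auto
qed

lemma triple_arith:
  fixes bi bj m P S2 a :: int
  assumes "bi + bj + m + P = 3*a - 3" "bi^2 + bj^2 + m^2 + S2 = a^2 - 1"
    "S2 \<le> m * P" "P \<le> 5*m" "bi + bj + m \<le> a" "bi \<ge> bj" "bj \<ge> m" "m \<ge> 0" "a \<ge> 2"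
  shows False
proof -
  define t where "t = bi + bj + m"
  have "(bi - m) * (bj - m) \<ge> 0" using assms by simp
  hence h1: "bi^2 + bj^2 \<le> (t - 2*m)^2 + m^2" unfolding t_def by (simp add: power2_eq_square algebra_simps)
  have P: "P = 3*a - 3 - t" using assms(1) t_def by simp
  have h2: "a^2 - 1 \<le> (t - 2*m)^2 + 2*m^2 + m*(3*a - 3 - t)"
    using assms(2,3) h1 P by (simp add: power2_eq_square algebra_simps)
  show False
  proof (cases "m = 0")
    case True
    then show ?thesis using assms P by simp
  next
    case False
    hence m1: "m \<ge> 1" using assms by simp
    have ta: "t \<le> a" "t \<ge> 3*m" using assms t_def by auto
    have "(a - t) * (a + t - 5*m) \<ge> 0" using ta m1 by (intro mult_nonneg_nonneg) auto
    hence h3: "(t - 2*m)^2 + 2*m^2 + m*(3*a - 3 - t) \<le> a^2 - 2*a*m + 6*m^2 - 3*m"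
      by (simp add: power2_eq_square algebra_simps)
    have "m * (2*a - 6*m) \<ge> 0" using ta m1 by (intro mult_nonneg_nonneg) auto
    moreover have "m * (2*a - 6*m) = 2*a*m - 6*m^2" by (simp add: power2_eq_square algebra_simps)
    moreover have "a^2 - 1 \<le> a^2 - 2*a*m + 6*m^2 - 3*m" using h2 h3 by linarith
    ultimately show False using m1 by linarith
  qed
qed

lemma triple:
  fixes b :: "'a \<Rightarrow> int"
  assumes fin: "finite I" and c8: "card I \<le> 8" and nn: "\<forall>i\<in>I. b i \<ge> 0"
    and s1: "(\<Sum>i\<in>I. b i) = 3*a - 3" and s2: "(\<Sum>i\<in>I. (b i)^2) = a^2 - 1" and a2: "a \<ge> 2"
  shows "\<exists>i\<in>I. \<exists>j\<in>I. \<exists>k\<in>I. i \<noteq> j \<and> i \<noteq> k \<and> j \<noteq> k \<and> b i + b j + b k > a"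
proof -
  have c3: "card I \<ge> 3"
  proof (rule ccontr)
    assume "\<not> card I \<ge> 3"
    hence "card I \<le> 2" by simp
    have cs: "(\<Sum>i\<in>I. b i)^2 \<le> int (card I) * (\<Sum>i\<in>I. (b i)^2)" using cs_int fin .
    have "int (card I) * (\<Sum>i\<in>I. (b i)^2) \<le> 2 * (\<Sum>i\<in>I. (b i)^2)"
      using \<open>card I \<le> 2\<close> by (intro mult_right_mono) (auto intro: sum_nonneg)
    with cs s1 s2 have "(3*a-3)^2 \<le> 2 * (a^2 - 1)" by simp
    hence "(a - 1) * (7*a - 11) \<le> 0" by (simp add: power2_eq_square algebra_simps)
    moreover have "(a - 1) * (7*a - 11) > 0" using a2 by (intro mult_pos_pos) auto
    ultimately show False by simp
  qed
  hence ne: "I \<noteq> {}" by auto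
  obtain i where i: "i \<in> I" "\<forall>l\<in>I. b l \<le> b i" using obtain_max[OF fin ne] by blast
  have "card (I - {i}) = card I - 1" using i fin by simp
  hence ne2: "I - {i} \<noteq> {}" using c3 by (intro notI) simp
  obtain j where j: "j \<in> I - {i}" "\<forall>l\<in>I - {i}. b l \<le> b j" using obtain_max[of "I - {i}"] fin ne2 by blast
  have cij: "card (I - {i,j}) = card I - 2" proof -
    have "card {i,j} = 2" using j by auto
    thus ?thesis using i j fin by (simp add: card_Diff_subset)
  qed
  have ne3: "I - {i,j} \<noteq> {}" using c3 cij by (intro notI) simp
  obtain k where k: "k \<in> I - {i,j}" "\<forall>l\<in>I - {i,j}. b l \<le> b k" using obtain_max[of "I - {i,j}"] fin ne3 by blast
  define R where "R = I - {i,j,k}"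
  have cR: "card R = card I - 3" unfolding R_def
  proof -
    have "card {i,j,k} = 3" using j k by auto
    thus "card (I - {i,j,k}) = card I - 3" using i j k fin by (simp add: card_Diff_subset)
  qed
  have Rle: "\<forall>l\<in>R. b l \<le> b k" using k unfolding R_def by auto
  have decomp: "\<And>f :: 'a \<Rightarrow> int. (\<Sum>l\<in>I. f l) = f i + f j + f k + (\<Sum>l\<in>R. f l)"
  proof -
    fix f :: "'a \<Rightarrow> int"
    have "I = insert i (insert j (insert k R))" unfolding R_def using i j k by auto
    moreover have "i \<notin> insert j (insert k R)" "j \<notin> insert k R" "k \<notin> R" unfolding R_def using i j k by auto
    moreover have "finite R" unfolding R_def using fin by simp
    ultimately show "(\<Sum>l\<in>I. f l) = f i + f j + f k + (\<Sum>l\<in>R. f l)" by (simp add: algebra_simps)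
  qed
  show ?thesis
  proof (rule ccontr)
    assume "\<not> ?thesis"
    hence le: "b i + b j + b k \<le> a" using i j k by force
    have S2: "(\<Sum>l\<in>R. (b l)^2) \<le> b k * (\<Sum>l\<in>R. b l)"
      unfolding sum_distrib_left
      by (intro sum_mono) (use Rle nn in \<open>auto simp: R_def power2_eq_square intro: mult_right_mono\<close>)
    have "(\<Sum>l\<in>R. b l) \<le> of_nat (card R) * b k" using Rle by (intro sum_bounded_above) auto
    moreover have "of_nat (card R) * b k \<le> 5 * b k" using cR c8 nn k by (intro mult_right_mono) auto
    ultimately have P: "(\<Sum>l\<in>R. b l) \<le> 5 * b k" by simp
    show False
      using triple_arith[of "b i" "b j" "b k" "\<Sum>l\<in>R. b l" a "\<Sum>l\<in>R. (b l)^2"]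
        s1 s2 decomp[of b] decomp[of "\<lambda>l. (b l)^2"] S2 P le a2 i j k nn by auto
  qed
qed




definition bv :: "'n \<Rightarrow> ('n \<Rightarrow> int)" where "bv j = (\<lambda>k. if k = j then 1 else 0)"

definition goodQ :: "(('n \<Rightarrow> int) \<Rightarrow> ('n \<Rightarrow> int) \<Rightarrow> int) \<Rightarrow> ('n \<Rightarrow> int) \<Rightarrow> bool" where
  "goodQ Q K \<longleftrightarrow> (\<forall>x y. Q x y = Q y x)
     \<and> (\<forall>p q x y z. Q (\<lambda>k. p * x k + q * y k) z = p * Q x z + q * Q y z)
     \<and> (\<forall>u v. (\<forall>k. Q u (bv k) = Q v (bv k)) \<longrightarrow> u = v)
     \<and> (\<forall>l. even (Q l l - Q l K))"

definition iso :: "(('n \<Rightarrow> int) \<Rightarrow> ('n \<Rightarrow> int) \<Rightarrow> int) \<Rightarrow> (('n \<Rightarrow> int) \<Rightarrow> ('n \<Rightarrow> int)) \<Rightarrow> bool" where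
  "iso Q g \<longleftrightarrow> (\<forall>x y. Q (g x) (g y) = Q x y)"

definition sref :: "(('n \<Rightarrow> int) \<Rightarrow> ('n \<Rightarrow> int) \<Rightarrow> int) \<Rightarrow> ('n \<Rightarrow> int) \<Rightarrow> ('n \<Rightarrow> int) \<Rightarrow> ('n \<Rightarrow> int)" where
  "sref Q a x = (\<lambda>k. x k + Q x a * a k)"

definition Fm :: "(('n \<Rightarrow> int) \<Rightarrow> ('n \<Rightarrow> int)) \<Rightarrow> 'n Kcls \<Rightarrow> 'n Kcls" where
  "Fm g x = (fst x, g (fst (snd x)), snd (snd x))"

lemma Fm_simp[simp]: "Fm g (r, c, s) = (r, g c, s)" by (simp add: Fm_def)

lemma gQ_sym: "goodQ Q K \<Longrightarrow> Q x y = Q y x" unfolding goodQ_def by blast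
lemma gQ_lin: "goodQ Q K \<Longrightarrow> Q (\<lambda>k. p * x k + q * y k) z = p * Q x z + q * Q y z" unfolding goodQ_def by blast
lemma gQ_nondeg: "goodQ Q K \<Longrightarrow> (\<And>k. Q u (bv k) = Q v (bv k)) \<Longrightarrow> u = v" unfolding goodQ_def by blast
lemma gQ_even: "goodQ Q K \<Longrightarrow> even (Q l l - Q l K)" unfolding goodQ_def by blast

lemma gQ_addl: "goodQ Q K \<Longrightarrow> Q (\<lambda>k. x k + r * y k) z = Q x z + r * Q y z"
  using gQ_lin[of Q K 1 x r y z] by simp
lemma gQ_addr: "goodQ Q K \<Longrightarrow> Q z (\<lambda>k. x k + r * y k) = Q z x + r * Q z y"
  using gQ_addl[of Q K x r y z] gQ_sym[of Q K] by metis
lemma gQ_diffl: "goodQ Q K \<Longrightarrow> Q (\<lambda>k. x k - y k) z = Q x z - Q y z"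
  using gQ_lin[of Q K 1 x "-1" y z] by simp
lemma gQ_diffr: "goodQ Q K \<Longrightarrow> Q z (\<lambda>k. x k - y k) = Q z x - Q z y"
  using gQ_diffl[of Q K x y z] gQ_sym[of Q K] by metis
lemma gQ_plusl: "goodQ Q K \<Longrightarrow> Q (x + y) z = Q x z + Q y z"
  using gQ_lin[of Q K 1 x 1 y z] by (simp add: plus_fun_def)
lemma gQ_zerol: "goodQ Q K \<Longrightarrow> Q 0 z = 0"
  using gQ_lin[of Q K 0 z 0 z z] by (simp add: zero_fun_def)
lemma gQ_zeror: "goodQ Q K \<Longrightarrow> Q z 0 = 0"
  using gQ_zerol[of Q K z] gQ_sym[of Q K] by metis
lemma gQ_smull: "goodQ Q K \<Longrightarrow> Q (\<lambda>k. r * y k) z = r * Q y z"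
  using gQ_lin[of Q K 0 y r y z] by simp

lemma iso_inj: assumes "goodQ Q K" "iso Q g" "g x = g y" shows "x = y"
proof (rule gQ_nondeg[OF assms(1)])
  fix k
  have "Q x (bv k) = Q (g x) (g (bv k))" using assms(2) by (simp add: iso_def)
  also have "\<dots> = Q (g y) (g (bv k))" using assms(3) by simp
  also have "\<dots> = Q y (bv k)" using assms(2) by (simp add: iso_def)
  finally show "Q x (bv k) = Q y (bv k)" .
qed

lemma iso_lin: assumes "goodQ Q K" "iso Q g" "surj g"
  shows "g (\<lambda>k. x k + r * y k) = (\<lambda>k. g x k + r * g y k)"
proof (rule gQ_nondeg[OF assms(1)])
  fix k
  obtain w where w: "bv k = g w" using assms(3) by (metis surjD)
  have "Q (g (\<lambda>k. x k + r * y k)) (g w) = Q (\<lambda>k. x k + r * y k) w" using assms(2) by (simp add: iso_def)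
  also have "\<dots> = Q x w + r * Q y w" using gQ_addl[OF assms(1)] .
  also have "\<dots> = Q (g x) (g w) + r * Q (g y) (g w)" using assms(2) by (simp add: iso_def)
  also have "\<dots> = Q (\<lambda>k. g x k + r * g y k) (g w)" using gQ_addl[OF assms(1)] by simp
  finally show "Q (g (\<lambda>k. x k + r * y k)) (bv k) = Q (\<lambda>k. g x k + r * g y k) (bv k)" using w by simp
qed

lemma iso_plus: assumes "goodQ Q K" "iso Q g" "surj g" shows "g (x + y) = g x + g y"
  using iso_lin[OF assms, of x 1 y] by (simp add: plus_fun_def)

lemma iso_fix_id: assumes "goodQ Q K" "iso Q g" "\<And>k. g (bv k) = bv k" shows "g = id"
proof
  fix x
  show "g x = id x"
  proof (simp, rule gQ_nondeg[OF assms(1)])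
    fix k
    have "Q (g x) (bv k) = Q (g x) (g (bv k))" using assms(3) by simp
    also have "\<dots> = Q x (bv k)" using assms(2) by (simp add: iso_def)
    finally show "Q (g x) (bv k) = Q x (bv k)" .
  qed
qed

section \<open>Reflections\<close>

lemma sref_iso: assumes "goodQ Q K" "Q a a = -2" shows "iso Q (sref Q a)"
  unfolding iso_def sref_def
proof (intro allI)
  fix x y
  show "Q (\<lambda>k. x k + Q x a * a k) (\<lambda>k. y k + Q y a * a k) = Q x y"
  proof -
    have "Q (\<lambda>k. x k + Q x a * a k) (\<lambda>k. y k + Q y a * a k)
       = Q x y + Q y a * Q x a + Q x a * (Q a y + Q y a * Q a a)"
      by (simp only: gQ_addl[OF assms(1)] gQ_addr[OF assms(1)])
    also have "\<dots> = Q x y" using assms(2) gQ_sym[OF assms(1), of a y] by (simp add: algebra_simps)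
    finally show ?thesis .
  qed
qed

lemma sref_invol: assumes "goodQ Q K" "Q a a = -2" shows "sref Q a (sref Q a x) = x"
proof -
  have "Q (\<lambda>k. x k + Q x a * a k) a = Q x a + Q x a * Q a a" by (rule gQ_addl[OF assms(1)])
  hence "Q (\<lambda>k. x k + Q x a * a k) a = - Q x a" using assms(2) by simp
  thus ?thesis unfolding sref_def by simp
qed

lemma sref_surj: assumes "goodQ Q K" "Q a a = -2" shows "surj (sref Q a)"
  by (metis assms sref_invol surjI)

lemma sref_K: assumes "goodQ Q K" "Q a K = 0" shows "sref Q a K = K"
  unfolding sref_def using assms gQ_sym[OF assms(1), of K a] by simp

lemma refl_Fm: assumes "goodQ Q K" shows "refl Q K (ns_cls a) = Fm (sref Q a)"
proof
  fix x :: "'a Kcls"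
  obtain r c s where x: "x = (r, c, s)" by (cases x) auto
  show "refl Q K (ns_cls a) x = Fm (sref Q a) x"
    unfolding x refl_def ns_cls_def euler_def sref_def
    by (simp add: Let_def fun_diff_def)
qed




lemma O_id: "id \<in> Ogroup Q K"
  by (simp add: Ogroup_def additive_map_def)

lemma O_comp: "f \<in> Ogroup Q K \<Longrightarrow> g \<in> Ogroup Q K \<Longrightarrow> f \<circ> g \<in> Ogroup Q K"
  unfolding Ogroup_def additive_map_def by (simp add: bij_comp del: split_paired_All)

lemma O_inv: assumes "f \<in> Ogroup Q K" shows "inv f \<in> Ogroup Q K"
proof -
  have b: "bij f" and a: "additive_map f" and e: "\<And>x y. euler Q K (f x) (f y) = euler Q K x y"
    and r: "\<And>x. rk (f x) = rk x" and d: "\<And>x. degK Q K (f x) = degK Q K x"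
    using assms by (auto simp: Ogroup_def)
  have fi: "\<And>x. f (inv f x) = x" using b by (simp add: bij_is_surj surj_f_inv_f)
  have inj: "inj f" using b bij_is_inj by auto
  have "additive_map (inv f)" unfolding additive_map_def
  proof (intro allI)
    fix x y
    have "f (inv f x + inv f y) = f (inv f x) + f (inv f y)" using a unfolding additive_map_def by blast
    hence "f (inv f x + inv f y) = x + y" using fi by simp
    thus "inv f (x + y) = inv f x + inv f y" using inj by (metis inv_f_f)
  qed
  moreover have "euler Q K (inv f x) (inv f y) = euler Q K x y" for x y
    using e[of "inv f x" "inv f y"] fi by simp
  moreover have "rk (inv f x) = rk x" for x using r[of "inv f x"] fi by simp
  moreover have "degK Q K (inv f x) = degK Q K x" for x using d[of "inv f x"] fi by simp
  ultimately show ?thesis using b bij_imp_bij_inv by (auto simp: Ogroup_def)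
qed

lemma gen_comp: "f \<in> gen_group S \<Longrightarrow> g \<in> gen_group S \<Longrightarrow> f \<circ> g \<in> gen_group S"
proof (induction f rule: gen_group.induct)
  case gen_id then show ?case by simp
next
  case (gen_mult f h) then show ?case by (metis comp_assoc gen_group.gen_mult)
next
  case (gen_inv f h) then show ?case by (metis comp_assoc gen_group.gen_inv)
qed

lemma gen_base: "f \<in> S \<Longrightarrow> f \<in> gen_group S"
  using gen_group.gen_mult[OF _ gen_group.gen_id] by fastforce

lemma gen_sub: assumes "S \<subseteq> Ogroup Q K" shows "gen_group S \<subseteq> Ogroup Q K"
proof
  fix f assume "f \<in> gen_group S"
  then show "f \<in> Ogroup Q K"
  proof (induction f rule: gen_group.induct)
    case gen_id then show ?case by (rule O_id)
  next
    case (gen_mult f g) then show ?case using assms O_comp by blast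
  next
    case (gen_inv f g) then show ?case using assms O_comp O_inv by blast
  qed
qed

lemma twist_simp[simp]: "twist Q K l (r, c, s) = (r, (\<lambda>i. c i + r * l i), s + Q c l + r * ((Q l l - Q l K) div 2))"
  by (simp add: twist_def)

lemma euler_simp[simp]: "euler Q K (r1, c1, s1) (r2, c2, s2) = r1 * r2 + r1 * s2 + r2 * s1 - Q c1 c2 + r2 * Q c1 K"
  by (simp add: euler_def)

lemma twist_in_O: assumes g: "goodQ Q K" and l: "Q l K = 0" shows "twist Q K l \<in> Ogroup Q K"
proof -
  define t where "t = (Q l l - Q l K) div 2"
  have t2: "2 * t = Q l l - Q l K" unfolding t_def using gQ_even[OF g, of l] by simp
  have inj: "inj (twist Q K l)"
  proof (rule injI)
    fix x y assume eq: "twist Q K l x = twist Q K l y"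
    obtain r1 c1 s1 where x: "x = (r1, c1, s1)" by (cases x) auto
    obtain r2 c2 s2 where y: "y = (r2, c2, s2)" by (cases y) auto
    from eq have r: "r1 = r2" and c: "(\<lambda>i. c1 i + r1 * l i) = (\<lambda>i. c2 i + r2 * l i)" by (auto simp: x y)
    from c r have cc: "c1 = c2" by (metis (no_types, lifting) add_right_cancel ext)
    from eq r cc show "x = y" by (simp add: x y)
  qed
  have surj: "surj (twist Q K l)"
    unfolding surj_def
  proof
    fix x :: "'a Kcls"
    obtain r c s where x: "x = (r, c, s)" by (cases x) auto
    let ?c = "(\<lambda>i. c i - r * l i)"
    have "twist Q K l (r, ?c, s - Q ?c l - r * t) = x"
      unfolding x by (simp add: t_def)
    thus "\<exists>z. x = twist Q K l z" by metis
  qed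
  have add: "additive_map (twist Q K l)" unfolding additive_map_def
  proof (intro allI)
    fix x y :: "'a Kcls"
    obtain r1 c1 s1 where x: "x = (r1, c1, s1)" by (cases x) auto
    obtain r2 c2 s2 where y: "y = (r2, c2, s2)" by (cases y) auto
    show "twist Q K l (x + y) = twist Q K l x + twist Q K l y"
      unfolding x y using gQ_plusl[OF g, of c1 c2 l] by (simp add: plus_fun_def algebra_simps)
  qed
  have eu: "euler Q K (twist Q K l x) (twist Q K l y) = euler Q K x y" for x y
  proof -
    obtain r1 c1 s1 where x: "x = (r1, c1, s1)" by (cases x) auto
    obtain r2 c2 s2 where y: "y = (r2, c2, s2)" by (cases y) auto
    have e1: "Q (\<lambda>i. c1 i + r1 * l i) (\<lambda>i. c2 i + r2 * l i) = Q c1 c2 + r2 * Q c1 l + r1 * Q l c2 + r1 * r2 * Q l l"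
      by (simp only: gQ_addl[OF g] gQ_addr[OF g]) (simp add: algebra_simps)
    have e2: "Q (\<lambda>i. c1 i + r1 * l i) K = Q c1 K + r1 * Q l K" by (rule gQ_addl[OF g])
    have e3: "Q l c2 = Q c2 l" by (rule gQ_sym[OF g])
    show ?thesis unfolding x y twist_simp euler_simp e1 e2 e3 t_def[symmetric]
    proof -
      have "r1 * r2 * (2 * t) = r1 * r2 * (Q l l - Q l K)" using t2 by simp
      thus "r1 * r2 + r1 * (s2 + Q c2 l + r2 * t) + r2 * (s1 + Q c1 l + r1 * t) -
    (Q c1 c2 + r2 * Q c1 l + r1 * Q c2 l + r1 * r2 * Q l l) + r2 * (Q c1 K + r1 * Q l K) =
    r1 * r2 + r1 * s2 + r2 * s1 - Q c1 c2 + r2 * Q c1 K" by (simp add: algebra_simps)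
    qed
  qed
  have rk: "rk (twist Q K l x) = rk x" for x by (cases x) (simp add: rk_def)
  have dg: "degK Q K (twist Q K l x) = degK Q K x" for x
    by (cases x) (simp add: degK_def gQ_addl[OF g] l)
  show ?thesis using inj surj add eu rk dg by (auto simp: Ogroup_def bij_def)
qed

lemma Fm_in_O: assumes g: "goodQ Q K" and i: "iso Q h" and s: "surj h" and k: "h K = K"
  shows "Fm h \<in> Ogroup Q K"
proof -
  have hi: "\<And>x y. Q (h x) (h y) = Q x y" using i by (simp add: iso_def)
  have inj: "inj (Fm h)"
  proof (rule injI)
    fix x y assume eq: "Fm h x = Fm h y"
    obtain r1 c1 s1 where x: "x = (r1, c1, s1)" by (cases x) auto
    obtain r2 c2 s2 where y: "y = (r2, c2, s2)" by (cases y) auto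
    from eq have "h c1 = h c2" by (simp add: x y)
    hence "c1 = c2" using iso_inj[OF g i] by blast
    with eq show "x = y" by (simp add: x y)
  qed
  have surj: "surj (Fm h)"
    unfolding surj_def
  proof
    fix x :: "'a Kcls"
    obtain r c s where x: "x = (r, c, s)" by (cases x) auto
    obtain c' where "c = h c'" using s by (metis surjD)
    hence "Fm h (r, c', s) = x" by (simp add: x)
    thus "\<exists>z. x = Fm h z" by metis
  qed
  have add: "additive_map (Fm h)" unfolding additive_map_def
    by (intro allI, simp add: Fm_def iso_plus[OF g i s])
  have eu: "euler Q K (Fm h x) (Fm h y) = euler Q K x y" for x y
  proof -
    obtain r1 c1 s1 where x: "x = (r1, c1, s1)" by (cases x) auto
    obtain r2 c2 s2 where y: "y = (r2, c2, s2)" by (cases y) auto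
    have "Q (h c1) K = Q c1 K" using hi[of c1 K] k by simp
    thus ?thesis by (simp add: x y hi)
  qed
  have rk: "rk (Fm h x) = rk x" for x by (simp add: rk_def Fm_def)
  have dg: "degK Q K (Fm h x) = degK Q K x" for x
    using hi[of "fst (snd x)" K] k by (simp add: degK_def Fm_def)
  show ?thesis using inj surj add eu rk dg by (auto simp: Ogroup_def bij_def)
qed




definition smul :: "int \<Rightarrow> 'n Kcls \<Rightarrow> 'n Kcls" where
  "smul r x = (r * fst x, (\<lambda>k. r * fst (snd x) k), r * snd (snd x))"

lemma additive_zero: "additive_map f \<Longrightarrow> f (0 :: 'n Kcls) = 0"
proof -
  assume a: "additive_map f"
  have "f (0 + 0) = f 0 + f 0" using a unfolding additive_map_def by blast
  thus ?thesis by simp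
qed

lemma additive_neg: "additive_map f \<Longrightarrow> f (- (x :: 'n Kcls)) = - f x"
proof -
  assume a: "additive_map f"
  have "f (x + - x) = f x + f (- x)" using a unfolding additive_map_def by blast
  hence "f x + f (- x) = 0" using additive_zero[OF a] by simp
  thus ?thesis by (simp add: add_eq_0_iff)
qed

lemma smul_Suc: "smul (1 + int n) x = x + smul (int n) x"
  by (cases x) (auto simp: smul_def plus_fun_def algebra_simps)

lemma smul_0: "smul 0 x = 0"
  by (cases x) (auto simp: smul_def zero_fun_def zero_prod_def)

lemma smul_neg: "smul (- r) x = - smul r x"
  by (cases x) (auto simp: smul_def fun_Compl_def)

lemma additive_smul_nat: "additive_map f \<Longrightarrow> f (smul (int n) x) = smul (int n) (f x)"
proof (induction n)
  case 0 then show ?case by (simp add: smul_0 additive_zero)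
next
  case (Suc n)
  have "f (smul (int (Suc n)) x) = f (x + smul (int n) x)" using smul_Suc[of n x] by simp
  also have "\<dots> = f x + f (smul (int n) x)" using Suc.prems unfolding additive_map_def by blast
  also have "\<dots> = smul (int (Suc n)) (f x)" using Suc by (simp add: smul_Suc)
  finally show ?case .
qed

lemma additive_smul: assumes "additive_map f" shows "f (smul r x) = smul r (f x)"
proof (cases "r \<ge> 0")
  case True
  then obtain n where "r = int n" by (metis nonneg_eq_int)
  then show ?thesis using additive_smul_nat[OF assms] by simp
next
  case False
  then obtain n where n: "r = - int n" by (metis le_cases neg_0_le_iff_le nonneg_eq_int minus_minus)
  have "f (smul r x) = f (- smul (int n) x)" by (simp add: n smul_neg)
  also have "\<dots> = - smul (int n) (f x)" using additive_neg[OF assms] additive_smul_nat[OF assms] by simp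
  finally show ?thesis by (simp add: n smul_neg)
qed

lemma decomp_vec: "((r, c, s) :: 'n Kcls) = smul r (1, 0, 0) + (0, c, 0) + smul s (0, 0, 1)"
  by (simp add: smul_def zero_fun_def)

lemma O_decomp:
  assumes g: "goodQ Q K" and f: "f \<in> Ogroup Q K"
  shows "\<exists>l h. Q l K = 0 \<and> iso Q h \<and> surj h \<and> h K = K \<and> f = twist Q K l \<circ> Fm h"
proof -
  have b: "bij f" and a: "additive_map f" and E: "\<And>x y. euler Q K (f x) (f y) = euler Q K x y"
    and R: "\<And>x. fst (f x) = fst x" and D: "\<And>x. degK Q K (f x) = degK Q K x"
    using f by (auto simp: Ogroup_def rk_def)
  have sf: "\<And>y. \<exists>x. f x = y" using b by (metis bij_is_surj surjD)
  have Q0l: "\<And>z. Q 0 z = 0" using gQ_zerol[OF g] .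
  have Q0r: "\<And>z. Q z 0 = 0" using gQ_zeror[OF g] .
  obtain u w where fd: "f (0, 0, 1) = (0, u, w)" using R[of "(0,0,1)"] by (cases "f (0,0,1)") auto
  have Ed: "euler Q K (f x) (0, u, w) = fst x" for x
  proof -
    have "euler Q K (f x) (0, u, w) = euler Q K x (0, 0, 1)" using E[of x "(0,0,1)"] fd by simp
    also have "\<dots> = fst x" by (cases x) (simp add: Q0r)
    finally show ?thesis .
  qed
  obtain x1 where x1: "f x1 = (1, 0, 0)" using sf by blast
  have "fst x1 = 1" using R[of x1] x1 by simp
  hence w1: "w = 1" using Ed[of x1] x1 by (simp add: Q0l)
  have u0: "u = 0"
  proof (rule gQ_nondeg[OF g])
    fix k
    obtain xk where xk: "f xk = (0, bv k, 0)" using sf by blast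
    have "fst xk = 0" using R[of xk] xk by simp
    hence "Q (bv k) u = 0" using Ed[of xk] xk by simp
    thus "Q u (bv k) = Q 0 (bv k)" using gQ_sym[OF g, of u "bv k"] Q0l by simp
  qed
  have fdelta: "f (0, 0, 1) = (0, 0, 1)" using fd u0 w1 by simp
  define h where "h c = fst (snd (f (0, c, 0)))" for c
  define lam where "lam c = snd (snd (f (0, c, 0)))" for c
  have f0: "f (0, c, 0) = (0, h c, lam c)" for c
    using R[of "(0,c,0)"] unfolding h_def lam_def by (cases "f (0,c,0)") auto
  define l where "l = fst (snd (f (1, 0, 0)))"
  define t where "t = snd (snd (f (1, 0, 0)))"
  have f1: "f (1, 0, 0) = (1, l, t)"
    using R[of "(1,0,0)"] unfolding l_def t_def by (cases "f (1,0,0)") auto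
  have fgen: "f (r, c, s) = (r, (\<lambda>i. r * l i + h c i), r * t + lam c + s)" for r c s
  proof -
    have "f (r, c, s) = f (smul r (1, 0, 0) + (0, c, 0) + smul s (0, 0, 1))" by (simp only: decomp_vec[symmetric])
    also have "\<dots> = f (smul r (1, 0, 0)) + f (0, c, 0) + f (smul s (0, 0, 1))"
      using a unfolding additive_map_def by metis
    also have "\<dots> = smul r (1, l, t) + (0, h c, lam c) + smul s (0, 0, 1)"
      by (simp add: additive_smul[OF a] f1 f0 fdelta)
    also have "\<dots> = (r, (\<lambda>i. r * l i + h c i), r * t + lam c + s)"
      by (simp add: smul_def plus_fun_def)
    finally show ?thesis .
  qed
  have hiso: "iso Q h" unfolding iso_def
  proof (intro allI)
    fix x y
    show "Q (h x) (h y) = Q x y" using E[of "(0,x,0)" "(0,y,0)"] by (simp add: f0)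
  qed
  have hK1: "Q (h c) K = Q c K" for c using D[of "(0,c,0)"] by (simp add: f0 degK_def)
  have lK: "Q l K = 0" using D[of "(1,0,0)"] by (simp add: f1 degK_def Q0l)
  have hsurj: "surj h" unfolding surj_def
  proof
    fix c'
    obtain x where x: "f x = (0, c', 0)" using sf by blast
    obtain r c s where xx: "x = (r, c, s)" by (cases x) auto
    have "r = 0" using R[of x] x xx by simp
    hence "(\<lambda>i. 0 * l i + h c i) = c'" using x xx fgen[of r c s] by simp
    hence "h c = c'" by simp
    thus "\<exists>c. c' = h c" by metis
  qed
  have hK: "h K = K"
  proof (rule gQ_nondeg[OF g])
    fix k
    obtain w where w: "bv k = h w" using hsurj by (metis surjD)
    have "Q (h K) (h w) = Q K w" using hiso by (simp add: iso_def)
    also have "\<dots> = Q w K" by (rule gQ_sym[OF g])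
    also have "\<dots> = Q (h w) K" using hK1 by simp
    also have "\<dots> = Q K (h w)" by (rule gQ_sym[OF g])
    finally show "Q (h K) (bv k) = Q K (bv k)" using w by simp
  qed
  have lam: "lam c = Q l (h c)" for c
    using E[of "(1,0,0)" "(0,c,0)"] by (simp add: f0 f1 Q0l)
  have t2: "2 * t = Q l l - Q l K"
    using E[of "(1,0,0)" "(1,0,0)"] by (simp add: f1 Q0l)
  have tt: "(Q l l - Q l K) div 2 = t" using t2[symmetric] by simp
  have "f = twist Q K l \<circ> Fm h"
  proof
    fix x :: "'a Kcls"
    obtain r c s where xx: "x = (r, c, s)" by (cases x) auto
    show "f x = (twist Q K l \<circ> Fm h) x"
      unfolding xx using fgen[of r c s] lam[of c] tt gQ_sym[OF g, of l "h c"]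
      by (simp add: algebra_simps)
  qed
  thus ?thesis using lK hiso hsurj hK by blast
qed





lemma root_in: assumes "goodQ Q K" "Q a a = -2" "Q a K = 0"
  shows "refl Q K (ns_cls a) \<in> {refl Q K \<alpha> | \<alpha>. \<alpha> \<in> finite_roots Q K}"
  using assms unfolding finite_roots_def ns_cls_def by auto

lemma roots_gen: assumes "goodQ Q K" "\<alpha> \<in> finite_roots Q K"
  obtains a where "\<alpha> = ns_cls a" "Q a a = -2" "Q a K = 0"
  using assms unfolding finite_roots_def ns_cls_def by auto

lemma reduce: assumes g: "goodQ Q K" and a: "Q a a = -2" "Q a K = 0"
  and w: "Fm (sref Q a \<circ> h) \<in> Weyl Q K" shows "Fm h \<in> Weyl Q K"
proof -
  have "Fm h = refl Q K (ns_cls a) \<circ> Fm (sref Q a \<circ> h)"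
  proof
    fix x :: "'a Kcls"
    show "Fm h x = (refl Q K (ns_cls a) \<circ> Fm (sref Q a \<circ> h)) x"
      by (simp add: refl_Fm[OF g] Fm_def sref_invol[of Q K a, OF g a(1)])
  qed
  moreover have "refl Q K (ns_cls a) \<circ> Fm (sref Q a \<circ> h) \<in> Weyl Q K"
    unfolding Weyl_def by (rule gen_group.gen_mult[OF root_in[of Q K a, OF g a] w[unfolded Weyl_def]])
  ultimately show ?thesis by simp
qed

lemma Weyl_O: assumes g: "goodQ Q K" shows "Weyl Q K \<subseteq> Ogroup Q K"
  unfolding Weyl_def
proof (rule gen_sub, safe)
  fix \<alpha> assume "\<alpha> \<in> finite_roots Q K"
  then obtain a where a: "\<alpha> = ns_cls a" "Q a a = -2" "Q a K = 0" using roots_gen[OF g] by blast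
  show "refl Q K \<alpha> \<in> Ogroup Q K" unfolding a(1) refl_Fm[OF g]
    using Fm_in_O[OF g sref_iso[of Q K a, OF g a(2)] sref_surj[of Q K a, OF g a(2)] sref_K[of Q K a, OF g a(3)]] .
qed

lemma Pic0_O: assumes g: "goodQ Q K" shows "Pic0 Q K \<subseteq> Ogroup Q K"
  unfolding Pic0_def using twist_in_O[OF g] by blast

lemma Weyl_fix: assumes g: "goodQ Q K" and w: "w \<in> Weyl Q K" shows "w (1, 0, 0) = (1, 0, 0)"
proof -
  have gen: "\<And>s. s \<in> {refl Q K \<alpha> | \<alpha>. \<alpha> \<in> finite_roots Q K} \<Longrightarrow> s (1, 0, 0) = (1, 0, 0) \<and> inj s"
  proof -
    fix s assume "s \<in> {refl Q K \<alpha> | \<alpha>. \<alpha> \<in> finite_roots Q K}"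
    then obtain \<alpha> where s: "s = refl Q K \<alpha>" "\<alpha> \<in> finite_roots Q K" by blast
    then obtain a where a: "\<alpha> = ns_cls a" "Q a a = -2" "Q a K = 0" using roots_gen[OF g] by blast
    have "s \<in> Weyl Q K" unfolding Weyl_def by (rule gen_base) (use s in blast)
    hence "s \<in> Ogroup Q K" using Weyl_O[OF g] by blast
    hence "inj s" by (simp add: Ogroup_def bij_is_inj)
    moreover have "s (1, 0, 0) = (1, 0, 0)"
    proof -
      have "Q (\<lambda>x. 0) a = 0" using gQ_zerol[OF g, of a] by (simp add: zero_fun_def)
      thus ?thesis unfolding s(1) a(1) refl_Fm[OF g] by (simp add: sref_def zero_fun_def)
    qed
    ultimately show "s (1, 0, 0) = (1, 0, 0) \<and> inj s" by blast
  qed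
  from w show ?thesis unfolding Weyl_def
  proof (induction w rule: gen_group.induct)
    case gen_id then show ?case by simp
  next
    case (gen_mult f h)
    have "f (1, 0, 0) = (1, 0, 0)" using gen[OF gen_mult.hyps(1)] by blast
    then show ?case using gen_mult.IH by (simp add: zero_fun_def)
  next
    case (gen_inv f h)
    have "f (1, 0, 0) = (1, 0, 0)" "inj f" using gen[OF gen_inv.hyps(1)] by blast+
    then show ?case using gen_inv.IH by (simp add: inv_f_eq zero_fun_def)
  qed
qed

lemma twist_zero: assumes g: "goodQ Q K" shows "twist Q K 0 = id"
proof
  fix x :: "'a Kcls"
  show "twist Q K 0 x = id x" by (cases x) (simp add: gQ_zerol[OF g] gQ_zeror[OF g])
qed

lemma twist_comm: assumes g: "goodQ Q K" shows "twist Q K m (twist Q K l x) = twist Q K l (twist Q K m x)"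
proof -
  obtain r c s where xx: "x = (r, c, s)" by (cases x) auto
  have e1: "Q (\<lambda>i. c i + r * l i) m = Q c m + r * Q l m" by (rule gQ_addl[OF g])
  have e2: "Q (\<lambda>i. c i + r * m i) l = Q c l + r * Q m l" by (rule gQ_addl[OF g])
  have e3: "Q m l = Q l m" by (rule gQ_sym[OF g])
  show ?thesis unfolding xx twist_simp e1 e2 e3 by (auto simp: algebra_simps)
qed

lemma Fm_twist: assumes g: "goodQ Q K" and hi: "iso Q h" and hs: "surj h" and hK: "h K = K"
  shows "Fm h (twist Q K l x) = twist Q K (h l) (Fm h x)"
proof -
  obtain r c s where xx: "x = (r, c, s)" by (cases x) auto
  have q: "\<And>x y. Q (h x) (h y) = Q x y" using hi by (simp add: iso_def)
  have "Q (h l) K = Q l K" using q[of l K] hK by simp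
  thus ?thesis unfolding xx twist_simp Fm_simp iso_lin[OF g hi hs] q by simp
qed




definition C1 :: "(('n::finite \<Rightarrow> int) \<Rightarrow> ('n \<Rightarrow> int) \<Rightarrow> int) \<Rightarrow> ('n \<Rightarrow> int) \<Rightarrow> (nat \<Rightarrow> 'n) \<Rightarrow> bool" where
  "C1 Q K e \<longleftrightarrow> bij_betw e {..<card (UNIV :: 'n set)} UNIV \<and> card (UNIV :: 'n set) \<le> 9 \<and>
       (\<forall>x y. Q x y = x (e 0) * y (e 0) - (\<Sum>i\<in>{1..<card (UNIV :: 'n set)}. x (e i) * y (e i))) \<and>
       K (e 0) = -3 \<and> (\<forall>i\<in>{1..<card (UNIV :: 'n set)}. K (e i) = 1)"

locale c1loc =
  fixes Q :: "('n::finite \<Rightarrow> int) \<Rightarrow> ('n \<Rightarrow> int) \<Rightarrow> int" and K :: "'n \<Rightarrow> int" and e :: "nat \<Rightarrow> 'n"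
    and N :: nat
  assumes c1: "C1 Q K e" and cN: "N = card (UNIV :: 'n set)"
begin

lemma c1_N: "N \<ge> 1"
  unfolding cN by (simp add: Suc_leI finite_UNIV_card_ge_0)

lemma c1_le9: "N \<le> 9" using c1 cN by (simp add: C1_def)

lemma c1_inj: "i < N \<Longrightarrow> j < N \<Longrightarrow> e i = e j \<Longrightarrow> i = j"
  using c1 cN unfolding C1_def bij_betw_def inj_on_def by auto

lemma c1_surj: obtains i where "i < N" "e i = k"
proof -
  have "e ` {..<N} = UNIV" using c1 cN unfolding C1_def bij_betw_def by blast
  hence "k \<in> e ` {..<N}" by blast
  thus ?thesis using that by blast
qed

lemma c1_Q: "Q x y = x (e 0) * y (e 0) - (\<Sum>i\<in>{1..<N}. x (e i) * y (e i))"
  using c1 cN by (simp add: C1_def)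

lemma c1_K0: "K (e 0) = -3" using c1 by (simp add: C1_def)
lemma c1_Ki: "i \<in> {1..<N} \<Longrightarrow> K (e i) = 1" using c1 cN by (simp add: C1_def)

lemma c1_ne0: "i \<in> {1..<N} \<Longrightarrow> e i \<noteq> e 0"
  using c1_inj[of i 0] c1_N by auto

lemma c1_bv0: "Q x (bv (e 0)) = x (e 0)"
proof -
  have "(\<Sum>i\<in>{1..<N}. x (e i) * bv (e 0) (e i)) = 0"
  proof (intro sum.neutral ballI)
    fix i assume "i \<in> {1..<N}"
    hence "e i \<noteq> e 0" by (rule c1_ne0)
    thus "x (e i) * bv (e 0) (e i) = 0" by (simp add: bv_def)
  qed
  thus ?thesis unfolding c1_Q by (simp add: bv_def)
qed

lemma c1_bvi: assumes j: "j \<in> {1..<N}" shows "Q x (bv (e j)) = - x (e j)"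
proof -
  have "(\<Sum>i\<in>{1..<N}. x (e i) * bv (e j) (e i)) = (\<Sum>i\<in>{1..<N}. if i = j then x (e j) else 0)"
    by (intro sum.cong) (use j c1_inj in \<open>auto simp: bv_def\<close>)
  also have "\<dots> = x (e j)" using j by simp
  finally show ?thesis unfolding c1_Q using c1_ne0[OF j] by (simp add: bv_def)
qed

lemma c1_good: "goodQ Q K"
  unfolding goodQ_def
proof (intro conjI allI impI)
  fix x y show "Q x y = Q y x" unfolding c1_Q by (simp add: mult.commute)
next
  fix p q x y z
  show "Q (\<lambda>k. p * x k + q * y k) z = p * Q x z + q * Q y z"
    unfolding c1_Q by (simp add: algebra_simps sum.distrib sum_distrib_left)
next
  fix u v :: "'n \<Rightarrow> int"
  assume h: "\<forall>k. Q u (bv k) = Q v (bv k)"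
  show "u = v"
  proof
    fix k
    obtain i where i: "i < N" "e i = k" using c1_surj by blast
    show "u k = v k"
    proof (cases "i = 0")
      case True
      have "Q u (bv (e 0)) = Q v (bv (e 0))" using h by blast
      hence "u (e 0) = v (e 0)" by (simp add: c1_bv0)
      thus ?thesis using i True by simp
    next
      case False
      hence ii: "i \<in> {1..<N}" using i by auto
      have "Q u (bv (e i)) = Q v (bv (e i))" using h by blast
      hence "u (e i) = v (e i)" by (simp add: c1_bvi[OF ii])
      thus ?thesis using i by simp
    qed
  qed
next
  fix l
  have QK: "Q l K = l (e 0) * (-3) - (\<Sum>i\<in>{1..<N}. l (e i))"
    unfolding c1_Q c1_K0 by (simp add: c1_Ki)
  have "Q l l - Q l K = (l (e 0) * l (e 0) + 3 * l (e 0)) - (\<Sum>i\<in>{1..<N}. l (e i) * l (e i) - l (e i))"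
    unfolding QK by (subst c1_Q) (simp add: sum_subtractf algebra_simps)
  moreover have "even (l (e 0) * l (e 0) + 3 * l (e 0))" by (cases "even (l (e 0))") auto
  moreover have "even (\<Sum>i\<in>{1..<N}. l (e i) * l (e i) - l (e i))"
    by (intro dvd_sum) (case_tac "even (l (e i))", auto)
  ultimately show "even (Q l l - Q l K)" by simp
qed


lemma c1_sym: "Q x y = Q y x" using gQ_sym[OF c1_good] .

lemma c1_bvl0: "Q (bv (e 0)) x = x (e 0)" using c1_bv0 c1_sym by metis
lemma c1_bvli: "j \<in> {1..<N} \<Longrightarrow> Q (bv (e j)) x = - x (e j)" using c1_bvi c1_sym by metis

lemma c1_bvval: "i < N \<Longrightarrow> j < N \<Longrightarrow> bv (e i) (e j) = (if i = j then 1 else 0)"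
  using c1_inj by (auto simp: bv_def)

lemma c1_ext: "(\<And>i. i < N \<Longrightarrow> u (e i) = v (e i)) \<Longrightarrow> u = v"
proof
  fix k assume h: "\<And>i. i < N \<Longrightarrow> u (e i) = v (e i)"
  obtain i where "i < N" "e i = k" using c1_surj by blast
  thus "u k = v k" using h by blast
qed

lemma c1_QK: "Q y K = - 3 * y (e 0) - (\<Sum>j\<in>{1..<N}. y (e j))"
  unfolding c1_Q c1_K0 by (simp add: c1_Ki)

lemma c1_Qsq: "Q y y = (y (e 0))^2 - (\<Sum>j\<in>{1..<N}. (y (e j))^2)"
  unfolding c1_Q by (simp add: power2_eq_square)

end

lemma unit_vec:
  fixes z :: "'a \<Rightarrow> int"
  assumes fin: "finite J" and s1: "(\<Sum>j\<in>J. z j) = 1" and s2: "(\<Sum>j\<in>J. (z j)^2) = 1"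
  shows "\<exists>j\<in>J. z j = 1 \<and> (\<forall>i\<in>J. i \<noteq> j \<longrightarrow> z i = 0)"
proof -
  have nn: "\<forall>j\<in>J. (z j)^2 - z j \<ge> 0"
  proof
    fix j assume "j \<in> J"
    show "(z j)^2 - z j \<ge> 0"
    proof (cases "z j \<ge> 1")
      case True thus ?thesis by (simp add: power2_eq_square)
    next
      case False hence "z j \<le> 0" by simp
      hence "z j * z j \<ge> 0" by (simp add: mult_nonpos_nonpos)
      thus ?thesis using \<open>z j \<le> 0\<close> unfolding power2_eq_square by linarith
    qed
  qed
  have "(\<Sum>j\<in>J. (z j)^2 - z j) = 0" using s1 s2 by (simp add: sum_subtractf)
  hence z01: "\<forall>j\<in>J. (z j)^2 - z j = 0" using sum_nonneg_eq_0_iff[OF fin, of "\<lambda>j. (z j)^2 - z j"] nn by simp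
  have z01': "\<forall>j\<in>J. z j = 0 \<or> z j = 1"
  proof
    fix j assume "j \<in> J"
    hence "z j * (z j - 1) = 0" using z01 by (simp add: power2_eq_square algebra_simps)
    thus "z j = 0 \<or> z j = 1" by simp
  qed
  obtain j where j: "j \<in> J" "z j \<noteq> 0"
  proof (rule ccontr)
    assume "\<not> thesis"
    hence "\<forall>j\<in>J. z j = 0" using that by blast
    hence "(\<Sum>j\<in>J. z j) = 0" by simp
    thus False using s1 by simp
  qed
  have zj: "z j = 1" using z01' j by blast
  have "(\<Sum>i\<in>J. (z i)^2) = (z j)^2 + (\<Sum>i\<in>J - {j}. (z i)^2)"
    using fin j(1) by (simp add: sum.remove)
  hence "(\<Sum>i\<in>J - {j}. (z i)^2) = 0" using s2 zj by simp
  hence "\<forall>i\<in>J - {j}. (z i)^2 = 0" using sum_nonneg_eq_0_iff[of "J - {j}" "\<lambda>i. (z i)^2"] fin by simp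
  thus ?thesis using j(1) zj by auto
qed




lemma Fm_id: "Fm id = id" by (rule ext) (simp add: Fm_def)

lemma sref_comp_props:
  assumes g: "goodQ Q K" and a: "Q a a = -2" "Q a K = 0" and i: "iso Q h" "surj h" "h K = K"
  shows "iso Q (sref Q a \<circ> h)" "surj (sref Q a \<circ> h)" "(sref Q a \<circ> h) K = K"
proof -
  have s1: "iso Q (sref Q a)" using sref_iso[of Q K a] g a by blast
  have s2: "surj (sref Q a)" using sref_surj[of Q K a] g a by blast
  have s3: "sref Q a K = K" using sref_K[of Q K a] g a by blast
  show "iso Q (sref Q a \<circ> h)" using s1 i(1) by (simp add: iso_def)
  show "surj (sref Q a \<circ> h)" using s2 i(2) by (rule comp_surj[rotated])
  show "(sref Q a \<circ> h) K = K" using s3 i(3) by simp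
qed

context c1loc begin

lemma c1_perm:
  assumes gi: "iso Q g" and gK: "g K = K" and g0: "g (bv (e 0)) = bv (e 0)" and i: "i \<in> {1..<N}"
  shows "\<exists>j\<in>{1..<N}. g (bv (e i)) = bv (e j)"
proof -
  define y where "y = g (bv (e i))"
  have q: "\<And>x z. Q (g x) (g z) = Q x z" using gi by (simp add: iso_def)
  have "y (e 0) = Q y (bv (e 0))" by (simp add: c1_bv0)
  also have "\<dots> = Q (bv (e i)) (bv (e 0))" unfolding y_def using q[of "bv (e i)" "bv (e 0)"] g0 by simp
  also have "\<dots> = 0" using c1_bvli[OF i] c1_ne0[OF i] by (simp add: bv_def)
  finally have y0: "y (e 0) = 0" .
  have "Q y y = Q (bv (e i)) (bv (e i))" unfolding y_def by (rule q)
  also have "\<dots> = -1" using c1_bvli[OF i] by (simp add: bv_def)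
  finally have yy: "Q y y = -1" .
  have "Q y K = Q (bv (e i)) K" unfolding y_def using q[of "bv (e i)" K] gK by simp
  also have "\<dots> = -1" using c1_bvli[OF i] c1_Ki[OF i] by simp
  finally have yK: "Q y K = -1" .
  have s2: "(\<Sum>j\<in>{1..<N}. (y (e j))^2) = 1" using yy y0 unfolding c1_Qsq by simp
  have s1: "(\<Sum>j\<in>{1..<N}. y (e j)) = 1" using yK y0 unfolding c1_QK by simp
  obtain j where j: "j \<in> {1..<N}" "y (e j) = 1" "\<forall>m\<in>{1..<N}. m \<noteq> j \<longrightarrow> y (e m) = 0"
    using unit_vec[of "{1..<N}" "\<lambda>j. y (e j)"] s1 s2 by auto
  have "y = bv (e j)"
  proof (rule c1_ext)
    fix m assume m: "m < N"
    show "y (e m) = bv (e j) (e m)"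
    proof (cases "m = 0")
      case True thus ?thesis using y0 j(1) c1_bvval[of j m] m by auto
    next
      case False
      hence "m \<in> {1..<N}" using m by auto
      thus ?thesis using j c1_bvval[of j m] m by auto
    qed
  qed
  thus ?thesis using j(1) unfolding y_def by blast
qed

lemma c1_bv_inj: "i < N \<Longrightarrow> j < N \<Longrightarrow> bv (e i) = bv (e j) \<Longrightarrow> i = j"
proof -
  assume ij: "i < N" "j < N" "bv (e i) = bv (e j)"
  have "bv (e i) (e i) = bv (e j) (e i)" using ij(3) by (rule arg_cong)
  moreover have "bv (e i) (e i) = 1" using c1_bvval[of i i] ij(1) by simp
  moreover have "bv (e j) (e i) = (if j = i then 1 else 0)" using c1_bvval[of j i] ij(1,2) by simp
  ultimately show "i = j" by (cases "i = j") simp_all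
qed

lemma c1_step2:
  "iso Q g \<Longrightarrow> surj g \<Longrightarrow> g K = K \<Longrightarrow> g (bv (e 0)) = bv (e 0) \<Longrightarrow> Fm g \<in> Weyl Q K"
proof (induction "card {i \<in> {1..<N}. g (bv (e i)) \<noteq> bv (e i)}" arbitrary: g rule: less_induct)
  case less
  note gd = c1_good
  define D where "D = {i \<in> {1..<N}. g (bv (e i)) \<noteq> bv (e i)}"
  have q: "\<And>x z. Q (g x) (g z) = Q x z" using less.prems(1) by (simp add: iso_def)
  show ?case
  proof (cases "D = {}")
    case True
    have "\<And>k. g (bv k) = bv k"
    proof -
      fix k
      obtain m where m: "m < N" "e m = k" using c1_surj by blast
      show "g (bv k) = bv k"
      proof (cases "m = 0")
        case True thus ?thesis using m less.prems(4) by simp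
      next
        case False
        hence "m \<in> {1..<N}" using m by auto
        thus ?thesis using \<open>D = {}\<close> m unfolding D_def by auto
      qed
    qed
    hence "g = id" using iso_fix_id[OF gd less.prems(1)] by blast
    thus ?thesis unfolding Weyl_def by (simp only: Fm_id) (rule gen_group.gen_id)
  next
    case False
    then obtain i where iD: "i \<in> D" by blast
    hence i: "i \<in> {1..<N}" and gi: "g (bv (e i)) \<noteq> bv (e i)" unfolding D_def by auto
    obtain j where j: "j \<in> {1..<N}" "g (bv (e i)) = bv (e j)"
      using c1_perm[OF less.prems(1) less.prems(3) less.prems(4) i] by blast
    have ij: "i \<noteq> j" using gi j by auto
    define a where "a = (\<lambda>k. bv (e i) k - bv (e j) k)"
    have Qa: "Q a z = - z (e i) + z (e j)" for z
      unfolding a_def gQ_diffl[OF gd] c1_bvli[OF i] c1_bvli[OF j(1)] by simp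
    have vi: "bv (e m) (e i) = (if m = i then 1 else 0)" "bv (e m) (e j) = (if m = j then 1 else 0)" if "m < N" for m
      using c1_bvval that i j(1) by auto
    have aa: "Q a a = -2" unfolding Qa using ij i j(1) by (simp add: a_def vi)
    have aK: "Q a K = 0" unfolding Qa using c1_Ki[OF i] c1_Ki[OF j(1)] by simp
    define g' where "g' = sref Q a \<circ> g"
    have g'p: "iso Q g'" "surj g'" "g' K = K" unfolding g'_def
      using sref_comp_props[of Q K a g, OF gd aa aK less.prems(1-3)] by auto
    have Qz: "Q z a = - z (e i) + z (e j)" for z using Qa c1_sym by metis
    have g'0: "g' (bv (e 0)) = bv (e 0)"
    proof -
      have "Q (bv (e 0)) a = 0" unfolding Qz using c1_ne0[OF i] c1_ne0[OF j(1)] by (simp add: bv_def)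
      thus ?thesis unfolding g'_def using less.prems(4) by (simp add: sref_def)
    qed
    define D' where "D' = {i \<in> {1..<N}. g' (bv (e i)) \<noteq> bv (e i)}"
    have sub: "D' \<subseteq> D - {i}"
    proof
      fix m assume mD': "m \<in> D'"
      hence m: "m \<in> {1..<N}" unfolding D'_def by auto
      show "m \<in> D - {i}"
      proof (rule ccontr)
        assume "m \<notin> D - {i}"
        hence cases: "m = i \<or> g (bv (e m)) = bv (e m)" using m unfolding D_def by auto
        have "g' (bv (e m)) = bv (e m)"
        proof (cases "m = i")
          case True
          have "Q (bv (e j)) a = 1" unfolding Qz using ij i j(1) vi[of j] by simp
          hence "g' (bv (e i)) = (\<lambda>k. bv (e j) k + a k)" unfolding g'_def using j(2) by (simp add: sref_def)
          also have "\<dots> = bv (e i)" unfolding a_def by simp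
          finally show ?thesis using True by simp
        next
          case False
          hence gm: "g (bv (e m)) = bv (e m)" using cases by simp
          have "m \<noteq> j"
          proof
            assume "m = j"
            hence "g (bv (e i)) = g (bv (e m))" using j(2) gm by simp
            hence "bv (e i) = bv (e m)" using iso_inj[OF gd less.prems(1)] by blast
            thus False using c1_bv_inj[of i m] i m False by auto
          qed
          hence "Q (bv (e m)) a = 0" unfolding Qz using False m vi[of m] by simp
          thus ?thesis unfolding g'_def using gm by (simp add: sref_def)
        qed
        thus False using mD' unfolding D'_def by simp
      qed
    qed
    have "card D' < card D"
    proof -
      have "finite D" unfolding D_def by simp
      hence "card (D - {i}) < card D" using iD by (rule card_Diff1_less)
      moreover have "card D' \<le> card (D - {i})" using sub \<open>finite D\<close> by (intro card_mono) auto
      ultimately show ?thesis by simp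
    qed
    hence "Fm g' \<in> Weyl Q K" using less.hyps[of g'] g'p g'0 unfolding D'_def D_def by blast
    thus ?thesis using reduce[of Q K a g, OF gd aa aK] unfolding g'_def by blast
  qed
qed

end



context c1loc begin

lemma c1_card: "card {1..<N} \<le> 8" using c1_le9 by simp

lemma c1_exc:
  assumes gi: "iso Q g" and gs: "surj g" and gK: "g K = K" and i: "i \<in> {1..<N}"
  shows "g (bv (e 0)) (e i) \<le> 0"
proof -
  have q: "\<And>x z. Q (g x) (g z) = Q x z" using gi by (simp add: iso_def)
  obtain y where y: "g y = bv (e i)" using gs by (metis surjD)
  have "- g (bv (e 0)) (e i) = Q (g (bv (e 0))) (bv (e i))" using c1_bvi[OF i] by simp
  also have "\<dots> = Q (bv (e 0)) y" using q[of "bv (e 0)" y] y by simp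
  also have "\<dots> = y (e 0)" by (rule c1_bvl0)
  finally have ey: "- g (bv (e 0)) (e i) = y (e 0)" .
  have "Q y y = Q (bv (e i)) (bv (e i))" using q[of y y] y by simp
  also have "\<dots> = -1" using c1_bvli[OF i] c1_bvval i by simp
  finally have yy: "Q y y = -1" .
  have "Q y K = Q (bv (e i)) K" using q[of y K] y gK by simp
  also have "\<dots> = -1" using c1_bvli[OF i] c1_Ki[OF i] by simp
  finally have yK: "Q y K = -1" .
  have "y (e 0) \<ge> 0"
    using exc_nonneg[of "{1..<N}" "y (e 0)" "\<lambda>j. y (e j)"] c1_card yy yK
    unfolding c1_Qsq c1_QK by simp
  thus ?thesis using ey by simp
qed

lemma c1_step1: "iso Q g \<Longrightarrow> surj g \<Longrightarrow> g K = K \<Longrightarrow> Fm g \<in> Weyl Q K"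
proof (induction "nat (g (bv (e 0)) (e 0))" arbitrary: g rule: less_induct)
  case less
  note gd = c1_good
  define x where "x = g (bv (e 0))"
  define a where "a = x (e 0)"
  define b where "b j = - x (e j)" for j
  have q: "\<And>u z. Q (g u) (g z) = Q u z" using less.prems(1) by (simp add: iso_def)
  have "Q x x = 1" unfolding x_def q c1_bvl0 by (simp add: bv_def)
  hence sb2: "(\<Sum>j\<in>{1..<N}. (b j)^2) = a^2 - 1" unfolding c1_Qsq a_def b_def by simp
  have "Q x K = -3" unfolding x_def using q[of "bv (e 0)" K] less.prems(3) c1_bvl0 c1_K0 by simp
  hence sb: "(\<Sum>j\<in>{1..<N}. b j) = 3 * a - 3" unfolding c1_QK a_def b_def by (simp add: sum_negf)
  have bnn: "\<forall>j\<in>{1..<N}. b j \<ge> 0" unfolding b_def x_def using c1_exc[OF less.prems] by simp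
  have "(\<Sum>j\<in>{1..<N}. b j) \<ge> 0" using bnn by (intro sum_nonneg) auto
  hence a1: "a \<ge> 1" using sb by simp
  show ?case
  proof (cases "a = 1")
    case True
    hence "(\<Sum>j\<in>{1..<N}. b j) = 0" using sb by simp
    hence b0: "\<forall>j\<in>{1..<N}. b j = 0" using sum_nonneg_eq_0_iff[of "{1..<N}" b] bnn by simp
    have "x = bv (e 0)"
    proof (rule c1_ext)
      fix m assume m: "m < N"
      show "x (e m) = bv (e 0) (e m)"
      proof (cases "m = 0")
        case True thus ?thesis using \<open>a = 1\<close> unfolding a_def by (simp add: bv_def)
      next
        case False
        hence "m \<in> {1..<N}" using m by auto
        thus ?thesis using b0 c1_ne0 unfolding b_def by (auto simp: bv_def)
      qed
    qed
    thus ?thesis using c1_step2[OF less.prems] unfolding x_def by blast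
  next
    case False
    hence a2: "a \<ge> 2" using a1 by simp
    obtain i j k where ijk: "i \<in> {1..<N}" "j \<in> {1..<N}" "k \<in> {1..<N}" "i \<noteq> j" "i \<noteq> k" "j \<noteq> k"
      "b i + b j + b k > a"
      using triple[of "{1..<N}" b a] c1_card bnn sb sb2 a2 by auto
    define \<alpha> where "\<alpha> = (\<lambda>m. bv (e 0) m - bv (e i) m - bv (e j) m - bv (e k) m)"
    have Qa: "Q \<alpha> z = z (e 0) + z (e i) + z (e j) + z (e k)" for z
      unfolding \<alpha>_def gQ_diffl[OF gd] c1_bvl0 c1_bvli[OF ijk(1)] c1_bvli[OF ijk(2)] c1_bvli[OF ijk(3)]
      by simp
    have Qz: "Q z \<alpha> = z (e 0) + z (e i) + z (e j) + z (e k)" for z using Qa c1_sym by metis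
    have N: "i < N" "j < N" "k < N" "0 < N" using ijk c1_N by auto
    have i0: "i \<noteq> 0" "j \<noteq> 0" "k \<noteq> 0" using ijk by auto
    have av: "\<alpha> (e 0) = 1" "\<alpha> (e i) = -1" "\<alpha> (e j) = -1" "\<alpha> (e k) = -1"
      unfolding \<alpha>_def using c1_bvval N ijk(4-6) i0 by auto
    have aa: "Q \<alpha> \<alpha> = -2" unfolding Qa av by simp
    have aK: "Q \<alpha> K = 0" unfolding Qa using c1_K0 c1_Ki ijk(1-3) by simp
    define g' where "g' = sref Q \<alpha> \<circ> g"
    have g'p: "iso Q g'" "surj g'" "g' K = K" unfolding g'_def
      using sref_comp_props[of Q K \<alpha> g, OF gd aa aK less.prems(1-3)] by auto
    have "g' (bv (e 0)) (e 0) = a + Q x \<alpha>"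
      unfolding g'_def by (simp add: sref_def x_def[symmetric] a_def av)
    moreover have "Q x \<alpha> = a - (b i + b j + b k)" unfolding Qz a_def b_def by simp
    ultimately have "g' (bv (e 0)) (e 0) < a" using ijk(7) by simp
    hence "nat (g' (bv (e 0)) (e 0)) < nat (g (bv (e 0)) (e 0))" using a1 unfolding a_def x_def by simp
    hence "Fm g' \<in> Weyl Q K" using less.hyps g'p by blast
    thus ?thesis using reduce[of Q K \<alpha> g, OF gd aa aK] unfolding g'_def by blast
  qed
qed

end



locale c2loc =
  fixes Q :: "('n::finite \<Rightarrow> int) \<Rightarrow> ('n \<Rightarrow> int) \<Rightarrow> int" and K :: "'n \<Rightarrow> int" and p0 p1 :: 'n
  assumes c2_ne: "p0 \<noteq> p1" and c2_all: "\<And>k. k = p0 \<or> k = p1"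
    and c2Q: "\<And>x y. Q x y = x p0 * y p1 + x p1 * y p0"
    and K0: "K p0 = -2" and K1: "K p1 = -2"
begin

lemma c2_ext: "u p0 = v p0 \<Longrightarrow> u p1 = v p1 \<Longrightarrow> u = v"
  using c2_all by (metis ext)

lemma c2_bv: "bv p0 p0 = 1" "bv p0 p1 = 0" "bv p1 p0 = 0" "bv p1 p1 = 1"
  using c2_ne by (auto simp: bv_def)

lemma c2_bv0: "Q x (bv p0) = x p1" unfolding c2Q by (simp add: c2_bv)
lemma c2_bv1: "Q x (bv p1) = x p0" unfolding c2Q by (simp add: c2_bv)

lemma c2_good: "goodQ Q K"
  unfolding goodQ_def
proof (intro conjI allI impI)
  fix x y show "Q x y = Q y x" unfolding c2Q by (simp add: algebra_simps)
next
  fix p q x y z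
  show "Q (\<lambda>k. p * x k + q * y k) z = p * Q x z + q * Q y z"
    unfolding c2Q by (simp add: algebra_simps)
next
  fix u v :: "'n \<Rightarrow> int"
  assume h: "\<forall>k. Q u (bv k) = Q v (bv k)"
  have "Q u (bv p0) = Q v (bv p0)" "Q u (bv p1) = Q v (bv p1)" using h by blast+
  thus "u = v" unfolding c2_bv0 c2_bv1 by (intro c2_ext) auto
next
  fix l
  have "Q l l - Q l K = 2 * (l p0 * l p1 + l p0 + l p1)"
    unfolding c2Q K0 K1 by (simp add: algebra_simps)
  thus "even (Q l l - Q l K)" by simp
qed

lemma c2_main: assumes gi: "iso Q g" and gs: "surj g" and gK: "g K = K" shows "Fm g \<in> Weyl Q K"
proof -
  note gd = c2_good
  have q: "\<And>u z. Q (g u) (g z) = Q u z" using gi by (simp add: iso_def)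
  have sym: "\<And>u z. Q u z = Q z u" using gQ_sym[OF gd] .
  define x where "x = g (bv p0)"
  define y where "y = g (bv p1)"
  have "Q x x = 0" unfolding x_def q c2_bv0 by (simp add: c2_bv)
  hence xx: "x p0 * x p1 = 0" unfolding c2Q by simp
  have "Q x K = -2" unfolding x_def using q[of "bv p0" K] gK sym[of "bv p0" K] c2_bv0 K1 by simp
  hence xK: "x p0 + x p1 = 1" unfolding c2Q K0 K1 by simp
  have "Q y y = 0" unfolding y_def q c2_bv1 by (simp add: c2_bv)
  hence yy: "y p0 * y p1 = 0" unfolding c2Q by simp
  have "Q y K = -2" unfolding y_def using q[of "bv p1" K] gK sym[of "bv p1" K] c2_bv1 K0 by simp
  hence yK: "y p0 + y p1 = 1" unfolding c2Q K0 K1 by simp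
  have "Q x y = 1" unfolding x_def y_def q c2_bv1 by (simp add: c2_bv)
  hence xy: "x p0 * y p1 + x p1 * y p0 = 1" unfolding c2Q by simp
  have xc: "(x p0 = 1 \<and> x p1 = 0) \<or> (x p0 = 0 \<and> x p1 = 1)" using xx xK by auto
  have yc: "(y p0 = 1 \<and> y p1 = 0) \<or> (y p0 = 0 \<and> y p1 = 1)" using yy yK by auto
  show ?thesis
  proof (cases "x p0 = 1")
    case True
    hence "x p1 = 0" "y p1 = 1" "y p0 = 0" using xc yc xy by auto
    hence "x = bv p0" "y = bv p1" using True by (auto intro!: c2_ext simp: c2_bv)
    hence "\<And>k. g (bv k) = bv k" using c2_all x_def y_def by metis
    hence "g = id" using iso_fix_id[OF gd gi] by blast
    thus ?thesis unfolding Weyl_def by (simp only: Fm_id) (rule gen_group.gen_id)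
  next
    case False
    hence "x p0 = 0" "x p1 = 1" "y p1 = 0" "y p0 = 1" using xc yc xy by auto
    hence xb: "x = bv p1" and yb: "y = bv p0" by (auto intro!: c2_ext simp: c2_bv)
    define a where "a = (\<lambda>k. bv p0 k - bv p1 k)"
    have Qa: "Q a z = z p1 - z p0" for z
      unfolding a_def gQ_diffl[OF gd] using sym c2_bv0 c2_bv1 by metis
    have Qz: "Q z a = z p1 - z p0" for z using Qa sym by metis
    have aa: "Q a a = -2" unfolding Qa by (simp add: a_def c2_bv)
    have aK: "Q a K = 0" unfolding Qa K0 K1 by simp
    define g' where "g' = sref Q a \<circ> g"
    have g'p: "iso Q g'" unfolding g'_def
      using sref_comp_props[of Q K a g, OF gd aa aK gi gs gK] by auto
    have gb0: "g (bv p0) = bv p1" using x_def xb by simp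
    have gb1: "g (bv p1) = bv p0" using y_def yb by simp
    have Q1: "Q (bv p1) a = 1" using Qz[of "bv p1"] by (simp add: c2_bv)
    have Q0: "Q (bv p0) a = -1" using Qz[of "bv p0"] by (simp add: c2_bv)
    have "g' (bv p0) = (\<lambda>k. bv p1 k + Q (bv p1) a * a k)" unfolding g'_def using gb0 by (simp add: sref_def)
    also have "\<dots> = bv p0" unfolding Q1 by (intro c2_ext) (simp_all add: a_def c2_bv)
    finally have "g' (bv p0) = bv p0" .
    moreover have "g' (bv p1) = (\<lambda>k. bv p0 k + Q (bv p0) a * a k)" unfolding g'_def using gb1 by (simp add: sref_def)
    moreover have "(\<lambda>k. bv p0 k + Q (bv p0) a * a k) = bv p1" unfolding Q0 by (intro c2_ext) (simp_all add: a_def c2_bv)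
    ultimately have "\<And>k. g' (bv k) = bv k" using c2_all by metis
    hence "g' = id" using iso_fix_id[OF gd g'p] by blast
    hence "Fm g' \<in> Weyl Q K" unfolding Weyl_def by (simp only: Fm_id) (rule gen_group.gen_id)
    thus ?thesis using reduce[of Q K a g, OF gd aa aK] unfolding g'_def by blast
  qed
qed

end

lemma dP_cases:
  fixes Q :: "('n::finite \<Rightarrow> int) \<Rightarrow> ('n \<Rightarrow> int) \<Rightarrow> int" and K :: "'n \<Rightarrow> int"
  assumes "dP_NS Q K"
  obtains e where "c1loc Q K e (card (UNIV :: 'n set))" | p0 p1 where "c2loc Q K p0 p1"
proof -
  obtain e where eb: "bij_betw e {..<card (UNIV :: 'n set)} UNIV" and
    cs: "(card (UNIV :: 'n set) \<le> 9 \<and>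
       (\<forall>x y. Q x y = x (e 0) * y (e 0) - (\<Sum>i\<in>{1..<card (UNIV :: 'n set)}. x (e i) * y (e i))) \<and>
       K (e 0) = -3 \<and> (\<forall>i\<in>{1..<card (UNIV :: 'n set)}. K (e i) = 1))
    \<or> (card (UNIV :: 'n set) = 2 \<and>
       (\<forall>x y. Q x y = x (e 0) * y (e 1) + x (e 1) * y (e 0)) \<and>
       K (e 0) = -2 \<and> K (e 1) = -2)"
    using assms unfolding dP_NS_def by blast
  from cs show ?thesis
  proof
    assume h: "card (UNIV :: 'n set) \<le> 9 \<and>
       (\<forall>x y. Q x y = x (e 0) * y (e 0) - (\<Sum>i\<in>{1..<card (UNIV :: 'n set)}. x (e i) * y (e i))) \<and>
       K (e 0) = -3 \<and> (\<forall>i\<in>{1..<card (UNIV :: 'n set)}. K (e i) = 1)"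
    have "c1loc Q K e (card (UNIV :: 'n set))"
      unfolding c1loc_def C1_def using eb h by blast
    thus ?thesis using that(1) by blast
  next
    assume h: "card (UNIV :: 'n set) = 2 \<and>
       (\<forall>x y. Q x y = x (e 0) * y (e 1) + x (e 1) * y (e 0)) \<and>
       K (e 0) = -2 \<and> K (e 1) = -2"
    have inj: "inj_on e {..<card (UNIV :: 'n set)}" using eb by (simp add: bij_betw_def)
    have m: "0 \<in> {..<card (UNIV :: 'n set)}" "1 \<in> {..<card (UNIV :: 'n set)}" using h by auto
    have "e 0 \<noteq> e 1" using inj_on_eq_iff[OF inj m] by simp
    moreover have "\<And>k. k = e 0 \<or> k = e 1"
    proof -
      fix k
      have "e ` {..<2} = UNIV" using eb h unfolding bij_betw_def by simp
      hence "k \<in> e ` {..<2}" by blast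
      then obtain i where "i < (2::nat)" "k = e i" by auto
      thus "k = e 0 \<or> k = e 1" by (cases i) auto
    qed
    ultimately have "c2loc Q K (e 0) (e 1)" unfolding c2loc_def using h by auto
    thus ?thesis using that(2) by blast
  qed
qed

lemma dP_good': "dP_NS Q K \<Longrightarrow> goodQ Q K"
  by (erule dP_cases) (auto intro: c1loc.c1_good c2loc.c2_good)

lemma weyl_main': "dP_NS Q K \<Longrightarrow> iso Q h \<Longrightarrow> surj h \<Longrightarrow> h K = K \<Longrightarrow> Fm h \<in> Weyl Q K"
  by (erule dP_cases) (auto intro: c1loc.c1_step1 c2loc.c2_main)


theorem proposition3p10:
  fixes Q :: "('n::finite \<Rightarrow> int) \<Rightarrow> ('n \<Rightarrow> int) \<Rightarrow> int" and K :: "'n \<Rightarrow> int"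
  assumes "dP_NS Q K"
  shows "Ogroup Q K = gen_group (Weyl Q K \<union> Pic0 Q K)
     \<and> Weyl Q K \<inter> Pic0 Q K = {id}
     \<and> (\<forall>g \<in> Ogroup Q K. \<forall>p \<in> Pic0 Q K. g \<circ> p \<circ> inv g \<in> Pic0 Q K)"
proof (intro conjI)
  have g: "goodQ Q K" using dP_good'[OF assms] .
  show "Ogroup Q K = gen_group (Weyl Q K \<union> Pic0 Q K)"
  proof
    show "Ogroup Q K \<subseteq> gen_group (Weyl Q K \<union> Pic0 Q K)"
    proof
      fix f assume "f \<in> Ogroup Q K"
      then obtain l h where lh: "Q l K = 0" "iso Q h" "surj h" "h K = K" "f = twist Q K l \<circ> Fm h"
        using O_decomp[OF g] by blast
      have "twist Q K l \<in> Pic0 Q K" using lh(1) unfolding Pic0_def by blast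
      moreover have "Fm h \<in> Weyl Q K" using weyl_main'[OF assms lh(2-4)] .
      ultimately show "f \<in> gen_group (Weyl Q K \<union> Pic0 Q K)"
        unfolding lh(5) by (intro gen_comp gen_base) auto
    qed
    show "gen_group (Weyl Q K \<union> Pic0 Q K) \<subseteq> Ogroup Q K"
      using gen_sub Weyl_O[OF g] Pic0_O[OF g] by (metis Un_least)
  qed
  show "Weyl Q K \<inter> Pic0 Q K = {id}"
  proof
    show "{id} \<subseteq> Weyl Q K \<inter> Pic0 Q K"
    proof -
      have "id \<in> Weyl Q K" unfolding Weyl_def by (rule gen_group.gen_id)
      moreover have "id \<in> Pic0 Q K" unfolding Pic0_def
        by (rule CollectI, rule exI[of _ 0]) (simp add: twist_zero[OF g] gQ_zerol[OF g])
      ultimately show ?thesis by blast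
    qed
    show "Weyl Q K \<inter> Pic0 Q K \<subseteq> {id}"
    proof
      fix p assume p: "p \<in> Weyl Q K \<inter> Pic0 Q K"
      then obtain l where l: "p = twist Q K l" unfolding Pic0_def by blast
      have "p (1, 0, 0) = (1, 0, 0)" using Weyl_fix[OF g] p by blast
      hence "l = 0" unfolding l by (auto simp: fun_eq_iff)
      thus "p \<in> {id}" using l twist_zero[OF g] by simp
    qed
  qed
  show "\<forall>f \<in> Ogroup Q K. \<forall>p \<in> Pic0 Q K. f \<circ> p \<circ> inv f \<in> Pic0 Q K"
  proof (intro ballI)
    fix f p assume f: "f \<in> Ogroup Q K" and p: "p \<in> Pic0 Q K"
    obtain l where l: "p = twist Q K l" "Q l K = 0" using p unfolding Pic0_def by blast
    obtain m h where mh: "Q m K = 0" "iso Q h" "surj h" "h K = K" "f = twist Q K m \<circ> Fm h"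
      using O_decomp[OF g f] by blast
    have fi: "\<And>x. f (inv f x) = x" using f by (simp add: Ogroup_def bij_is_surj surj_f_inv_f)
    have "f \<circ> p \<circ> inv f = twist Q K (h l)"
    proof
      fix x
      have "f (p y) = twist Q K (h l) (f y)" for y
        unfolding mh(5) l(1) comp_def Fm_twist[OF g mh(2-4)] twist_comm[OF g] ..
      thus "(f \<circ> p \<circ> inv f) x = twist Q K (h l) x" using fi by simp
    qed
    moreover have "Q (h l) K = 0" using mh(2,4) l(2) by (metis iso_def)
    ultimately show "f \<circ> p \<circ> inv f \<in> Pic0 Q K" unfolding Pic0_def by blast
  qed
qed


end
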